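(* There exist differentiable functions $f_1,f_2:\mathbb{R}\to\mathbb{R}$ such that $f=\frac12(f_1+f_2)$ is bounded from below and has $1$-Lipschitz derivative, and such that for the stochastic gradient $g(x)=f_i'(x)$, where $i$ is drawn uniformly at random from $\{1,2\}$ (so $\mathbb{E}[g(x)]=f'(x)$), there are no constants $\alpha,\beta\ge 0$ with $\mathbb{E}|g(x)|^2\le \alpha |f'(x)|^2+\beta$ for all $x\in\mathbb{R}$.
   Context: The inequality $\mathbb{E}|g(x)|^2\le\alpha|f'(x)|^2+\beta$ for all $x$ is called the relaxed growth condition. *)

theory Defs
  imports "HOL-Analysis.Analysis"
begin

end

theory Submission
  imports Defs
begin

lemma d1: "deriv (\<lambda>x::real. x\<^sup>2) x = 2 * x"
  by (rule DERIV_imp_deriv) (auto intro!: derivative_eq_intros)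

lemma d2: "deriv (\<lambda>x::real. - x\<^sup>2) x = - 2 * x"
  by (rule DERIV_imp_deriv) (auto intro!: derivative_eq_intros)

theorem proposition1:
  shows "\<exists>f1 f2 :: real \<Rightarrow> real.
    (\<forall>x. f1 differentiable (at x)) \<and> (\<forall>x. f2 differentiable (at x)) \<and>
    (let f = (\<lambda>x. (f1 x + f2 x) / 2) in
      bdd_below (range f) \<and>
      (\<forall>x y. \<bar>deriv f x - deriv f y\<bar> \<le> 1 * \<bar>x - y\<bar>) \<and>
      \<not> (\<exists>\<alpha> \<beta>. \<alpha> \<ge> 0 \<and> \<beta> \<ge> 0 \<and>
            (\<forall>x. ((deriv f1 x)\<^sup>2 + (deriv f2 x)\<^sup>2) / 2 \<le> \<alpha> * (deriv f x)\<^sup>2 + \<beta>)))"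
proof (rule exI[of _ "\<lambda>x. x\<^sup>2"], rule exI[of _ "\<lambda>x. - x\<^sup>2"], intro conjI)
  show "\<forall>x. (\<lambda>x::real. x\<^sup>2) differentiable (at x)" by (auto intro!: derivative_intros)
  show "\<forall>x. (\<lambda>x::real. - x\<^sup>2) differentiable (at x)" by (auto intro!: derivative_intros)
  have f0: "(\<lambda>x::real. (x\<^sup>2 + - x\<^sup>2) / 2) = (\<lambda>x. 0)" by simp
  have nb: "\<not> (\<exists>\<alpha> \<beta>. \<alpha> \<ge> 0 \<and> \<beta> \<ge> 0 \<and>
            (\<forall>x::real. ((2*x)\<^sup>2 + (-2*x)\<^sup>2) / 2 \<le> \<alpha> * 0\<^sup>2 + \<beta>))"
  proof
    assume "\<exists>\<alpha> \<beta>. \<alpha> \<ge> 0 \<and> \<beta> \<ge> 0 \<and>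
            (\<forall>x::real. ((2*x)\<^sup>2 + (-2*x)\<^sup>2) / 2 \<le> \<alpha> * 0\<^sup>2 + \<beta>)"
    then obtain a b :: real where b: "b \<ge> 0" and h: "\<forall>x::real. ((2*x)\<^sup>2 + (-2*x)\<^sup>2) / 2 \<le> a * 0\<^sup>2 + b"
      by blast
    have "((2*(b+1))\<^sup>2 + (-2*(b+1))\<^sup>2) / 2 \<le> a * 0\<^sup>2 + b" using h by blast
    moreover have "0 \<le> b * b" using b by simp
    ultimately show False using b by (simp add: power2_eq_square algebra_simps)
  qed
  show "let f = (\<lambda>x. ((\<lambda>x::real. x\<^sup>2) x + (\<lambda>x. - x\<^sup>2) x) / 2) in
      bdd_below (range f) \<and>
      (\<forall>x y. \<bar>deriv f x - deriv f y\<bar> \<le> 1 * \<bar>x - y\<bar>) \<and>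
      \<not> (\<exists>\<alpha> \<beta>. \<alpha> \<ge> 0 \<and> \<beta> \<ge> 0 \<and>
            (\<forall>x. ((deriv (\<lambda>x. x\<^sup>2) x)\<^sup>2 + (deriv (\<lambda>x. - x\<^sup>2) x)\<^sup>2) / 2 \<le> \<alpha> * (deriv f x)\<^sup>2 + \<beta>))"
    unfolding Let_def f0 d1 d2 using nb by simp
qed

end
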